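(* Let $n\ge1$ and $a'_\ell=\mathrm{cmr}(a_\ell)$ for $\ell=1,\dots,n$. Then in the plactic monoid $\mathcal A_n^*/{\equiv_{\mathrm{knu}}}$: $a'_p\,a'_r\,a'_q\equiv_{\mathrm{knu}}a'_r\,a'_p\,a'_q$ whenever $1\le p\le q<r\le n$, and $a'_q\,a'_p\,a'_r\equiv_{\mathrm{knu}}a'_q\,a'_r\,a'_p$ whenever $1\le p<q\le r\le n$. Consequently, for all $u,v\in\mathcal A_n^*$, $u\equiv_{\mathrm{knu}}v$ implies $\mathrm{cmr}(u)\equiv_{\mathrm{knu}}\mathrm{cmr}(v)$.
   Context: $\mathcal A_n=\{a_1<\cdots<a_n\}$. The co-mirror of a letter is $\mathrm{cmr}(a_\ell)=a_na_{n-1}\cdots a_1$ with the letter $a_{n-\ell+1}$ omitted (a word of length $n-1$), extended to words by $\mathrm{cmr}(a_{\ell_1}\cdots a_{\ell_m})=\mathrm{cmr}(a_{\ell_1})\cdots\mathrm{cmr}(a_{\ell_m})$. $\equiv_{\mathrm{knu}}$ is the congruence on $\mathcal A_n^*$ generated by $xzy=zxy$ ($x\le y<z$) and $yxz=yzx$ ($x<y\le z$) for letters $x,y,z$. *)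

theory Defs
  imports Main
begin

text \<open>Alphabet A_n = {1,...,n} (letter a_l is the natural number l); words are nat lists.\<close>

definition cmr_letter :: "nat \<Rightarrow> nat \<Rightarrow> nat list" where
  "cmr_letter n l = filter (\<lambda>a. a \<noteq> n - l + 1) (rev [1..<n+1])"

definition cmr :: "nat \<Rightarrow> nat list \<Rightarrow> nat list" where
  "cmr n w = concat (map (cmr_letter n) w)"

inductive knu_step :: "nat \<Rightarrow> nat list \<Rightarrow> nat list \<Rightarrow> bool" for n where
  knuth1: "\<lbrakk>set u \<subseteq> {1..n}; set w \<subseteq> {1..n}; 1 \<le> x; x \<le> y; y < z; z \<le> n\<rbrakk>
     \<Longrightarrow> knu_step n (u @ [x, z, y] @ w) (u @ [z, x, y] @ w)"
| knuth2: "\<lbrakk>set u \<subseteq> {1..n}; set w \<subseteq> {1..n}; 1 \<le> x; x < y; y \<le> z; z \<le> n\<rbrakk>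
     \<Longrightarrow> knu_step n (u @ [y, x, z] @ w) (u @ [y, z, x] @ w)"

inductive knu_equiv :: "nat \<Rightarrow> nat list \<Rightarrow> nat list \<Rightarrow> bool" for n where
  refl: "set u \<subseteq> {1..n} \<Longrightarrow> knu_equiv n u u"
| step: "knu_step n u v \<Longrightarrow> knu_equiv n u v"
| sym: "knu_equiv n u v \<Longrightarrow> knu_equiv n v u"
| trans: "knu_equiv n u v \<Longrightarrow> knu_equiv n v w \<Longrightarrow> knu_equiv n u w"

end

theory Submission
  imports Defs
begin

abbreviation V :: "nat \<Rightarrow> nat list \<Rightarrow> bool" where
  "V n w \<equiv> set w \<subseteq> {1..n}"

lemma knu_valid: "knu_equiv n u v \<Longrightarrow> V n u \<and> V n v"
proof (induction rule: knu_equiv.induct)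
  case (step u v) then show ?case by (cases rule: knu_step.cases) auto
qed auto

lemma k1: "V n u \<Longrightarrow> V n w \<Longrightarrow> 1 \<le> x \<Longrightarrow> x \<le> y \<Longrightarrow> y < z \<Longrightarrow> z \<le> n
  \<Longrightarrow> knu_equiv n (u @ [x, z, y] @ w) (u @ [z, x, y] @ w)"
  by (intro knu_equiv.step knu_step.knuth1) auto

lemma k2: "V n u \<Longrightarrow> V n w \<Longrightarrow> 1 \<le> x \<Longrightarrow> x < y \<Longrightarrow> y \<le> z \<Longrightarrow> z \<le> n
  \<Longrightarrow> knu_equiv n (u @ [y, x, z] @ w) (u @ [y, z, x] @ w)"
  by (intro knu_equiv.step knu_step.knuth2) auto

lemma ctx: "knu_equiv n a b \<Longrightarrow> V n p \<Longrightarrow> V n q \<Longrightarrow> knu_equiv n (p @ a @ q) (p @ b @ q)"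
proof (induction rule: knu_equiv.induct)
  case (refl u) then show ?case by (intro knu_equiv.refl) auto
next
  case (step u v)
  from step(1) show ?case
  proof (cases rule: knu_step.cases)
    case (knuth1 u' w x y z)
    then show ?thesis using step(2,3) k1[where u="p@u'" and w="w@q" and x=x and y=y and z=z] by simp
  next
    case (knuth2 u' w x y z)
    then show ?thesis using step(2,3) k2[where u="p@u'" and w="w@q" and x=x and y=y and z=z] by simp
  qed
next
  case (sym u v) then show ?case by (blast intro: knu_equiv.sym)
next
  case (trans u v w) then show ?case by (blast intro: knu_equiv.trans)
qed

lemma tr[trans]: "knu_equiv n a b \<Longrightarrow> knu_equiv n b c \<Longrightarrow> knu_equiv n a c"
  by (rule knu_equiv.trans)
lemma sy: "knu_equiv n a b \<Longrightarrow> knu_equiv n b a"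
  by (rule knu_equiv.sym)

lemma L0: "sorted_wrt (>) (x#xs) \<Longrightarrow> x \<le> w \<Longrightarrow> w \<le> n \<Longrightarrow> V n (x#xs) \<Longrightarrow> V n p \<Longrightarrow> V n q
  \<Longrightarrow> knu_equiv n (p @ (x#xs) @ [w] @ q) (p @ x # w # xs @ q)"
proof (induction xs arbitrary: x p)
  case Nil then show ?case using knu_equiv.refl[where n=n and u="p @ [x, w] @ q"] by auto
next
  case (Cons x2 xs)
  have a: "knu_equiv n ((p@[x]) @ (x2#xs) @ [w] @ q) ((p@[x]) @ x2 # w # xs @ q)"
    using Cons by (intro Cons.IH) auto
  have b: "knu_equiv n (p @ [x, x2, w] @ (xs @ q)) (p @ [x, w, x2] @ (xs @ q))"
    using Cons by (intro k2) auto
  show ?case using tr[OF a] b by simp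
qed

lemma refl': "a = b \<Longrightarrow> V n a \<Longrightarrow> knu_equiv n a b"
  using knu_equiv.refl by blast

lemma F1: "sorted_wrt (>) X \<Longrightarrow> sorted_wrt (>) Y \<Longrightarrow> length X \<le> length Y
  \<Longrightarrow> (\<forall>i<length X. X!i \<le> Y!i) \<Longrightarrow> (\<forall>y\<in>set Y. y < z) \<Longrightarrow> 1 \<le> z \<Longrightarrow> z \<le> n
  \<Longrightarrow> V n X \<Longrightarrow> V n Y \<Longrightarrow> V n p \<Longrightarrow> V n q
  \<Longrightarrow> knu_equiv n (p @ X @ z # Y @ q) (p @ z # X @ Y @ q)"
proof (induction X arbitrary: Y p z)
  case Nil then show ?case by (intro refl') auto
next
  case (Cons x X')
  obtain y Y' where Y: "Y = y # Y'" using Cons.prems(3) by (cases Y) auto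
  have xy: "x \<le> y" using Cons.prems(4) Y by (metis length_greater_0_conv list.discI nth_Cons_0)
  have yz: "y < z" using Cons.prems(5) Y by auto
  have a: "knu_equiv n (p @ (x#X') @ [z] @ (y # Y' @ q)) (p @ x # z # X' @ (y # Y' @ q))"
    using Cons.prems Y xy yz by (intro L0) auto
  have b: "knu_equiv n ((p @ [x, z]) @ X' @ y # Y' @ q) ((p @ [x, z]) @ y # X' @ Y' @ q)"
  proof (rule Cons.IH)
    show "\<forall>i<length X'. X' ! i \<le> Y' ! i"
    proof (intro allI impI)
      fix i assume "i < length X'"
      then show "X' ! i \<le> Y' ! i" using Cons.prems(4) Y by (metis Suc_less_eq length_Cons nth_Cons_Suc)
    qed
  qed (use Cons.prems Y xy yz in auto)
  have c: "knu_equiv n (p @ [x, z, y] @ (X' @ Y' @ q)) (p @ [z, x, y] @ (X' @ Y' @ q))"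
    using Cons.prems Y xy yz by (intro k1) auto
  have d: "knu_equiv n ((p @ [z]) @ (x#X') @ [y] @ (Y' @ q)) ((p @ [z]) @ x # y # X' @ (Y' @ q))"
    using Cons.prems Y xy yz by (intro L0) auto
  have "knu_equiv n (p @ (x#X') @ z # Y @ q) (p @ x # z # y # X' @ Y' @ q)"
    using tr[OF a] b Y by simp
  also have "knu_equiv n \<dots> (p @ z # x # y # X' @ Y' @ q)" using c by simp
  also have "knu_equiv n \<dots> (p @ z # (x # X') @ Y @ q)" using sy[OF d] Y by simp
  finally show ?case .
qed

lemma dom_le: "sorted_wrt (>) X \<Longrightarrow> \<forall>x\<in>set X. x \<le> m \<Longrightarrow> i < length X \<Longrightarrow> X!i + i \<le> m"
proof (induction X arbitrary: i m)
  case Nil then show ?case by simp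
next
  case (Cons x X)
  show ?case
  proof (cases i)
    case 0 then show ?thesis using Cons by simp
  next
    case (Suc j)
    have "\<forall>y\<in>set X. y \<le> m - 1" using Cons.prems(1,2) by fastforce
    then have "X!j + j \<le> m - 1" using Cons Suc by simp
    moreover have "m \<ge> 1" using Cons.prems Suc by (cases X) auto
    ultimately show ?thesis using Suc by simp
  qed
qed

lemma F1c: "sorted_wrt (>) X \<Longrightarrow> (\<forall>x\<in>set X. x \<le> m) \<Longrightarrow> length X \<le> length Y
  \<Longrightarrow> (\<forall>i<length Y. Y!i + i = m) \<Longrightarrow> sorted_wrt (>) Y \<Longrightarrow> m < z \<Longrightarrow> z \<le> n
  \<Longrightarrow> V n X \<Longrightarrow> V n Y \<Longrightarrow> V n p \<Longrightarrow> V n q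
  \<Longrightarrow> knu_equiv n (p @ X @ z # Y @ q) (p @ z # X @ Y @ q)"
proof (rule F1)
  assume h: "sorted_wrt (>) X" "\<forall>x\<in>set X. x \<le> m" "length X \<le> length Y" "\<forall>i<length Y. Y!i + i = m"
  show "\<forall>i<length X. X!i \<le> Y!i"
  proof (intro allI impI)
    fix i assume i: "i < length X"
    have "X!i + i \<le> m" using dom_le[OF h(1,2) i] .
    moreover have "Y!i + i = m" using h(3,4) i by simp
    ultimately show "X!i \<le> Y!i" by simp
  qed
next
  assume h: "\<forall>i<length Y. Y!i + i = m" "m < z"
  show "\<forall>y\<in>set Y. y < z"
  proof
    fix y assume "y \<in> set Y"
    then obtain i where "i < length Y" "Y!i = y" by (auto simp: in_set_conv_nth)
    then show "y < z" using h by force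
  qed
qed auto

definition rc :: "nat \<Rightarrow> nat list \<Rightarrow> nat list" where
  "rc n w = rev (map (\<lambda>x. Suc n - x) w)"

lemma rc_append[simp]: "rc n (a @ b) = rc n b @ rc n a" by (simp add: rc_def)
lemma rc_Cons[simp]: "rc n (x # w) = rc n w @ [Suc n - x]" by (simp add: rc_def)
lemma rc_Nil[simp]: "rc n [] = []" by (simp add: rc_def)
lemma rc_V: "V n w \<Longrightarrow> V n (rc n w)" by (auto simp: rc_def subset_iff)
lemma rc_rc: "V n w \<Longrightarrow> rc n (rc n w) = w"
  by (induction w) (auto simp: rc_def)

lemma knu_rc: "knu_equiv n u v \<Longrightarrow> knu_equiv n (rc n u) (rc n v)"
proof (induction rule: knu_equiv.induct)
  case (refl u) then show ?case by (intro knu_equiv.refl rc_V)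
next
  case (step u v)
  from step show ?case
  proof (cases rule: knu_step.cases)
    case (knuth1 u' w x y z)
    have "knu_equiv n (rc n w @ [Suc n - y, Suc n - z, Suc n - x] @ rc n u')
                      (rc n w @ [Suc n - y, Suc n - x, Suc n - z] @ rc n u')"
      using knuth1 by (intro k2 rc_V) auto
    then show ?thesis using knuth1 by simp
  next
    case (knuth2 u' w x y z)
    have "knu_equiv n (rc n w @ [Suc n - z, Suc n - x, Suc n - y] @ rc n u')
                      (rc n w @ [Suc n - x, Suc n - z, Suc n - y] @ rc n u')"
      using knuth2 by (intro k1 rc_V) auto
    then show ?thesis using knuth2 by simp
  qed
next
  case (sym u v) then show ?case by (blast intro: knu_equiv.sym)
next
  case (trans u v w) then show ?case by (blast intro: knu_equiv.trans)
qed

lemma knu_unrc: "knu_equiv n (rc n a) (rc n b) \<Longrightarrow> V n a \<Longrightarrow> V n b \<Longrightarrow> knu_equiv n a b"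
  using knu_rc[of n "rc n a" "rc n b"] rc_rc by metis

lemma rc_sorted: "sorted_wrt (>) X \<Longrightarrow> V n X \<Longrightarrow> sorted_wrt (>) (rc n X)"
  unfolding rc_def sorted_wrt_rev sorted_wrt_map
  by (rule sorted_wrt_mono_rel[of _ "(>)"]) auto

lemma rc_upt: "rc n (rev [b..<Suc t]) = map (\<lambda>x. Suc n - x) [b..<Suc t]"
  by (simp add: rc_def rev_map)

lemma F2c: "sorted_wrt (>) Y \<Longrightarrow> (\<forall>y\<in>set Y. b \<le> y \<and> y \<le> n) \<Longrightarrow> length Y \<le> length X
  \<Longrightarrow> X = rev [b..<Suc t] \<Longrightarrow> t \<le> n \<Longrightarrow> b \<le> n \<Longrightarrow> 1 \<le> a \<Longrightarrow> a < b \<Longrightarrow> V n p \<Longrightarrow> V n q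
  \<Longrightarrow> knu_equiv n (p @ X @ a # Y @ q) (p @ X @ Y @ a # q)"
proof -
  assume h: "sorted_wrt (>) Y" "\<forall>y\<in>set Y. b \<le> y \<and> y \<le> n" "length Y \<le> length X"
    "X = rev [b..<Suc t]" "t \<le> n" "b \<le> n" "1 \<le> a" "a < b" "V n p" "V n q"
  have VX: "V n X" using h by auto
  have VY: "V n Y" using h by force
  have sX: "sorted_wrt (>) X" using h(4) by (simp add: sorted_wrt_rev del: upt_Suc)
  have "knu_equiv n (rc n q @ rc n Y @ (Suc n - a) # rc n X @ rc n p)
                    (rc n q @ (Suc n - a) # rc n Y @ rc n X @ rc n p)"
  proof (rule F1c[where m = "Suc n - b"])
    show "sorted_wrt (>) (rc n Y)" using rc_sorted[OF h(1) VY] .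
    show "sorted_wrt (>) (rc n X)" using rc_sorted[OF sX VX] .
    show "\<forall>x\<in>set (rc n Y). x \<le> Suc n - b" using h(2) by (auto simp: rc_def)
    show "length (rc n Y) \<le> length (rc n X)" using h(3) by (simp add: rc_def)
    show "\<forall>i<length (rc n X). rc n X ! i + i = Suc n - b"
      using h(4,5) by (auto simp: rc_upt simp del: upt_Suc)
    show "Suc n - b < Suc n - a" using h(6,8) by simp
    show "Suc n - a \<le> n" using h(7) by simp
    show "V n (rc n Y)" using rc_V[OF VY] .
    show "V n (rc n X)" using rc_V[OF VX] .
    show "V n (rc n p)" using rc_V[OF h(9)] .
    show "V n (rc n q)" using rc_V[OF h(10)] .
  qed
  then have "knu_equiv n (rc n (p @ X @ a # Y @ q)) (rc n (p @ X @ Y @ a # q))" by simp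
  moreover have "V n (p @ X @ a # Y @ q)" "V n (p @ X @ Y @ a # q)" using h VX VY by auto
  ultimately show ?thesis by (rule knu_unrc)
qed

lemma zXz: "sorted_wrt (>) X \<Longrightarrow> \<forall>x\<in>set X. 1 \<le> x \<and> x < z \<Longrightarrow> 1 \<le> z \<Longrightarrow> z \<le> n \<Longrightarrow> V n p \<Longrightarrow> V n q
  \<Longrightarrow> knu_equiv n (p @ z # X @ z # q) (p @ z # z # X @ q)"
proof -
  assume h: "sorted_wrt (>) X" "\<forall>x\<in>set X. 1 \<le> x \<and> x < z" "1 \<le> z" "z \<le> n" "V n p" "V n q"
  have VX: "V n X" using h(2,4) by fastforce
  show ?thesis
  proof (cases X)
    case Nil
    have "V n (p @ z # X @ z # q)" using h VX by auto
    then show ?thesis using Nil by (intro refl') auto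
  next
    case (Cons x X')
    have xz: "x < z" "1 \<le> x" using h(2) Cons by auto
    have a: "knu_equiv n ((p@[z]) @ (x#X') @ [z] @ q) ((p@[z]) @ x # z # X' @ q)"
    proof (rule L0)
      show "sorted_wrt (>) (x # X')" using h(1) Cons by simp
      show "V n (x # X')" using VX Cons by simp
      show "V n (p @ [z])" using h(3,4,5) by simp
    qed (use xz h in auto)
    have b: "knu_equiv n (p @ [z, x, z] @ (X' @ q)) (p @ [z, z, x] @ (X' @ q))"
    proof (rule k2)
      show "V n (X' @ q)" using VX Cons h(6) by simp
    qed (use xz h in auto)
    show ?thesis using tr[OF a] b Cons by simp
  qed
qed

lemma aXa: "sorted_wrt (>) X \<Longrightarrow> \<forall>x\<in>set X. a < x \<and> x \<le> n \<Longrightarrow> 1 \<le> a \<Longrightarrow> a \<le> n \<Longrightarrow> V n p \<Longrightarrow> V n q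
  \<Longrightarrow> knu_equiv n (p @ a # X @ a # q) (p @ X @ a # a # q)"
proof -
  assume h: "sorted_wrt (>) X" "\<forall>x\<in>set X. a < x \<and> x \<le> n" "1 \<le> a" "a \<le> n" "V n p" "V n q"
  have VX: "V n X" using h(2,3) by fastforce
  have "knu_equiv n (rc n q @ (Suc n - a) # rc n X @ (Suc n - a) # rc n p)
                    (rc n q @ (Suc n - a) # (Suc n - a) # rc n X @ rc n p)"
  proof (rule zXz)
    show "sorted_wrt (>) (rc n X)" using rc_sorted[OF h(1) VX] .
    show "\<forall>x\<in>set (rc n X). 1 \<le> x \<and> x < Suc n - a" using h(2) by (auto simp: rc_def)
    show "V n (rc n p)" using rc_V[OF h(5)] .
    show "V n (rc n q)" using rc_V[OF h(6)] .
  qed (use h in auto)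
  then have "knu_equiv n (rc n (p @ a # X @ a # q)) (rc n (p @ X @ a # a # q))" by simp
  moreover have "V n (p @ a # X @ a # q)" "V n (p @ X @ a # a # q)" using h VX by auto
  ultimately show ?thesis by (rule knu_unrc)
qed

lemma shift: "knu_equiv k u v \<Longrightarrow> knu_equiv (Suc k) (map Suc u) (map Suc v)"
proof (induction rule: knu_equiv.induct)
  case (refl u) then show ?case by (intro knu_equiv.refl) auto
next
  case (step u v)
  from step show ?case
  proof (cases rule: knu_step.cases)
    case (knuth1 u' w x y z)
    have "knu_equiv (Suc k) (map Suc u' @ [Suc x, Suc z, Suc y] @ map Suc w) (map Suc u' @ [Suc z, Suc x, Suc y] @ map Suc w)"
      using knuth1 by (intro k1) auto
    then show ?thesis using knuth1 by simp
  next
    case (knuth2 u' w x y z)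
    have "knu_equiv (Suc k) (map Suc u' @ [Suc y, Suc x, Suc z] @ map Suc w) (map Suc u' @ [Suc y, Suc z, Suc x] @ map Suc w)"
      using knuth2 by (intro k2) auto
    then show ?thesis using knuth2 by simp
  qed
next
  case (sym u v) then show ?case by (blast intro: knu_equiv.sym)
next
  case (trans u v w) then show ?case by (blast intro: knu_equiv.trans)
qed

lemma mono: "knu_equiv k u v \<Longrightarrow> knu_equiv (Suc k) u v"
proof (induction rule: knu_equiv.induct)
  case (refl u) then show ?case by (intro knu_equiv.refl) auto
next
  case (step u v)
  from step show ?case
  proof (cases rule: knu_step.cases)
    case (knuth1 u' w x y z)
    then show ?thesis using k1[where n="Suc k" and u=u' and w=w and x=x and y=y and z=z] by force
  next
    case (knuth2 u' w x y z)
    then show ?thesis using k2[where n="Suc k" and u=u' and w=w and x=x and y=y and z=z] by force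
  qed
next
  case (sym u v) then show ?case by (blast intro: knu_equiv.sym)
next
  case (trans u v w) then show ?case by (blast intro: knu_equiv.trans)
qed

lemma three1: "\<forall>x\<in>set X2. 1 < x \<and> x \<le> n \<Longrightarrow> \<forall>x\<in>set X3. 1 < x \<and> x \<le> n \<Longrightarrow>
  sorted_wrt (>) X2 \<Longrightarrow> sorted_wrt (>) X3 \<Longrightarrow> V n X1 \<Longrightarrow> 1 \<le> n \<Longrightarrow>
  knu_equiv n (X1 @ 1 # X2 @ 1 # X3 @ [1]) (X1 @ X2 @ X3 @ [1,1,1])"
proof -
  assume h: "\<forall>x\<in>set X2. 1 < x \<and> x \<le> n" "\<forall>x\<in>set X3. 1 < x \<and> x \<le> n"
    "sorted_wrt (>) X2" "sorted_wrt (>) X3" "V n X1" "1 \<le> n"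
  have V2: "V n X2" and V3: "V n X3" using h(1,2) by fastforce+
  have a: "knu_equiv n (X1 @ 1 # X2 @ 1 # (X3 @ [1])) (X1 @ X2 @ 1 # 1 # (X3 @ [1]))"
    using h V3 by (intro aXa) auto
  have b: "knu_equiv n ((X1 @ X2 @ [1]) @ 1 # X3 @ 1 # []) ((X1 @ X2 @ [1]) @ X3 @ 1 # 1 # [])"
    using h V2 by (intro aXa) auto
  have c: "knu_equiv n ((X1 @ X2) @ 1 # X3 @ 1 # [1]) ((X1 @ X2) @ X3 @ 1 # 1 # [1])"
    using h V2 by (intro aXa) auto
  show ?thesis using a b c by simp (meson tr)
qed

lemma threeN: "\<forall>x\<in>set X1. 1 \<le> x \<and> x < n \<Longrightarrow> \<forall>x\<in>set X2. 1 \<le> x \<and> x < n \<Longrightarrow>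
  sorted_wrt (>) X1 \<Longrightarrow> sorted_wrt (>) X2 \<Longrightarrow> V n X3 \<Longrightarrow> 1 \<le> n \<Longrightarrow>
  knu_equiv n (n # X1 @ n # X2 @ n # X3) (n # n # n # X1 @ X2 @ X3)"
proof -
  assume h: "\<forall>x\<in>set X1. 1 \<le> x \<and> x < n" "\<forall>x\<in>set X2. 1 \<le> x \<and> x < n"
    "sorted_wrt (>) X1" "sorted_wrt (>) X2" "V n X3" "1 \<le> n"
  have V1: "V n X1" and V2: "V n X2" using h(1,2) by fastforce+
  have a: "knu_equiv n ((n # X1) @ n # X2 @ n # X3) ((n # X1) @ n # n # X2 @ X3)"
    using h V1 by (intro zXz) auto
  have b: "knu_equiv n ([] @ n # X1 @ n # (n # X2 @ X3)) ([] @ n # n # X1 @ (n # X2 @ X3))"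
    using h V2 by (intro zXz) auto
  have c: "knu_equiv n ([n] @ n # X1 @ n # (X2 @ X3)) ([n] @ n # n # X1 @ (X2 @ X3))"
    using h V2 by (intro zXz) auto
  show ?thesis using a b c by simp (meson tr)
qed

definition col :: "nat \<Rightarrow> nat \<Rightarrow> nat list" where
  "col n m = filter (\<lambda>a. a \<noteq> m) (rev [1..<n+1])"

lemma dn1: "rev [1..<Suc k + 1] = Suc k # rev [1..<k+1]" by simp
lemma dn2: "rev [1..<Suc k + 1] = map Suc (rev [1..<k+1]) @ [1]"
proof -
  have "[1..<Suc k + 1] = 1 # [Suc 1..<Suc (k+1)]" by (simp add: upt_rec)
  also have "[Suc 1..<Suc (k+1)] = map Suc [1..<k+1]" by (simp only: map_Suc_upt)
  finally show ?thesis by (simp add: rev_map)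
qed

lemma col_top: "m \<le> k \<Longrightarrow> col (Suc k) m = Suc k # col k m"
  unfolding col_def by (subst dn1) simp

lemma fm: "2 \<le> m \<Longrightarrow> filter (\<lambda>a. a \<noteq> m) (map Suc L) = map Suc (filter (\<lambda>a. a \<noteq> m - 1) L)"
  by (induction L) auto

lemma col_bot: "2 \<le> m \<Longrightarrow> col (Suc k) m = map Suc (col k (m-1)) @ [1]"
  unfolding col_def by (subst dn2) (simp add: fm)

lemma col_set: "set (col n m) = {1..n} - {m}"
  unfolding col_def by auto

lemma col_V: "V n (col n m)" by (auto simp: col_set)

lemma col_sorted: "sorted_wrt (>) (col n m)"
  unfolding col_def
  by (rule sorted_wrt_filter) (simp add: sorted_wrt_rev del: upt_Suc)

lemma red1:
  assumes k: "2 \<le> k" and ix: "\<forall>X\<in>{A,B,C,A',B',C'}. 2 \<le> X"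
    and IH: "knu_equiv k (col k (A-1) @ col k (B-1) @ col k (C-1)) (col k (A'-1) @ col k (B'-1) @ col k (C'-1))"
  shows "knu_equiv (Suc k) (col (Suc k) A @ col (Suc k) B @ col (Suc k) C) (col (Suc k) A' @ col (Suc k) B' @ col (Suc k) C')"
proof -
  have g: "\<forall>x\<in>set (map Suc (col k X)). 1 < x \<and> x \<le> Suc k" for X by (auto simp: col_set)
  have sr: "sorted_wrt (>) (map Suc (col k X))" for X using col_sorted[of k X] by (simp add: sorted_wrt_map)
  have vv: "V (Suc k) (map Suc (col k X))" for X by (auto simp: col_set)
  have e1: "knu_equiv (Suc k) (col (Suc k) A @ col (Suc k) B @ col (Suc k) C)
     (map Suc (col k (A-1) @ col k (B-1) @ col k (C-1)) @ [1,1,1])"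
    using three1[OF g g sr sr vv] ix by (simp add: col_bot)
  have e2: "knu_equiv (Suc k) (col (Suc k) A' @ col (Suc k) B' @ col (Suc k) C')
     (map Suc (col k (A'-1) @ col k (B'-1) @ col k (C'-1)) @ [1,1,1])"
    using three1[OF g g sr sr vv] ix by (simp add: col_bot)
  have e3: "knu_equiv (Suc k) ([] @ map Suc (col k (A-1) @ col k (B-1) @ col k (C-1)) @ [1,1,1])
     ([] @ map Suc (col k (A'-1) @ col k (B'-1) @ col k (C'-1)) @ [1,1,1])"
    by (rule ctx[OF shift[OF IH]]) auto
  show ?thesis using tr[OF tr[OF e1] sy[OF e2]] e3 by simp
qed

lemma red2:
  assumes ix: "\<forall>X\<in>{A,B,C,A',B',C'}. X \<le> k" and k: "1 \<le> k"
    and IH: "knu_equiv k (col k A @ col k B @ col k C) (col k A' @ col k B' @ col k C')"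
  shows "knu_equiv (Suc k) (col (Suc k) A @ col (Suc k) B @ col (Suc k) C) (col (Suc k) A' @ col (Suc k) B' @ col (Suc k) C')"
proof -
  have g: "\<forall>x\<in>set (col k X). 1 \<le> x \<and> x < Suc k" for X by (auto simp: col_set)
  have vv: "V (Suc k) (col k X)" for X by (auto simp: col_set)
  have e1: "knu_equiv (Suc k) (col (Suc k) A @ col (Suc k) B @ col (Suc k) C)
     (Suc k # Suc k # Suc k # col k A @ col k B @ col k C)"
    using threeN[OF g g col_sorted col_sorted vv] ix by (simp add: col_top)
  have e2: "knu_equiv (Suc k) (col (Suc k) A' @ col (Suc k) B' @ col (Suc k) C')
     (Suc k # Suc k # Suc k # col k A' @ col k B' @ col k C')"
    using threeN[OF g g col_sorted col_sorted vv] ix by (simp add: col_top)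
  have e3: "knu_equiv (Suc k) ([Suc k, Suc k, Suc k] @ (col k A @ col k B @ col k C) @ [])
     ([Suc k, Suc k, Suc k] @ (col k A' @ col k B' @ col k C') @ [])"
    by (rule ctx[OF mono[OF IH]]) auto
  show ?thesis using tr[OF tr[OF e1] sy[OF e2]] e3 by simp
qed

lemma consec: "\<forall>i<length (rev [b..<Suc m]). rev [b..<Suc m] ! i + i = m"
  by (auto simp: rev_nth simp del: upt_Suc)

context
  fixes n :: nat and M :: "nat list"
  assumes n2: "2 \<le> n" and M_def: "M = rev [2..<n]"
begin

lemma sn: "Suc (n - 1) = n" using n2 by simp
lemma u1: "[1..<n] = 1 # [2..<n]" using n2 upt_conv_Cons[of 1 n] by (simp add: numeral_2_eq_2)
lemma eM: "M = rev [2..<Suc (n-1)]" unfolding sn M_def ..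
lemma eM1: "M @ [1] = rev [1..<Suc (n-1)]"
  unfolding sn M_def u1 by simp
lemma enM: "n # M = rev [2..<Suc n]" using n2 M_def by simp
lemma sM: "sorted_wrt (>) M" using M_def by (simp add: sorted_wrt_rev del: upt_Suc)
lemma setM: "set M = {2..<n}" using M_def by simp
lemma lenM: "length M = n - 2" using M_def by simp
lemma sM1: "sorted_wrt (>) (M @ [1])" using sM setM by (auto simp: sorted_wrt_append)
lemma snM: "sorted_wrt (>) (n # M)" using sM setM by auto
lemma iM: "\<forall>i<length M. M ! i + i = n - 1" using consec[of 2 "n-1"] eM by simp
lemma iM1: "\<forall>i<length (M @ [1]). (M @ [1]) ! i + i = n - 1" using consec[of 1 "n-1"] eM1 by simp
lemma VM: "V n M" using setM by auto
lemma VM1: "V n (M @ [1])" using setM n2 by auto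
lemma VnM: "V n (n # M)" using setM n2 by auto

lemma dn_split: "rev [1..<n+1] = n # M @ [1]"
proof -
  have "[1..<n+1] = [1..<n] @ [n]" using n2 by simp
  then show ?thesis unfolding u1 M_def by simp
qed

lemma col_n: "col n n = M @ [1]"
  unfolding col_def dn_split using setM n2 by (auto intro: filter_True)
lemma col_1: "col n 1 = n # M"
  unfolding col_def dn_split using setM n2 by (auto intro: filter_True)
lemma col_Q: "1 < Q \<Longrightarrow> Q < n \<Longrightarrow> col n Q = n # filter (\<lambda>a. a \<noteq> Q) M @ [1]"
  unfolding col_def dn_split by auto

lemma baseA: "knu_equiv n (col n n @ col n 1 @ col n n) (col n 1 @ col n n @ col n n)"
proof -
  have A1: "knu_equiv n ((M @ [1]) @ M @ n # (M @ [1]) @ []) ((M @ [1]) @ n # M @ (M @ [1]) @ [])"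
    by (rule F1c[where m="n-1"]) (use sM sM1 setM iM1 VM VM1 VnM n2 in auto)
  have A2: "knu_equiv n ([] @ M @ 1 # M @ (n # M @ [1])) ([] @ M @ M @ 1 # (n # M @ [1]))"
    by (rule F2c[where b=2 and t="n-1"]) (use sM setM eM VM VM1 VnM n2 in auto)
  have A3: "knu_equiv n (M @ (M @ [1]) @ n # (M @ [1]) @ []) (M @ n # (M @ [1]) @ (M @ [1]) @ [])"
    by (rule F1c[where m="n-1"]) (use sM sM1 setM iM1 VM VM1 VnM n2 in auto)
  have A4: "knu_equiv n ([] @ M @ n # (M @ [1]) @ (M @ [1])) ([] @ n # M @ (M @ [1]) @ (M @ [1]))"
    by (rule F1c[where m="n-1"]) (use sM sM1 setM iM1 VM VM1 VnM n2 in auto)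
  show ?thesis unfolding col_n col_1 using sy[OF A1] A2 A3 A4 by simp (meson tr)
qed

lemma baseB: "knu_equiv n (col n 1 @ col n n @ col n 1) (col n 1 @ col n 1 @ col n n)"
proof -
  have B1: "knu_equiv n ([] @ M @ n # (M @ [1]) @ (n # M)) ([] @ n # M @ (M @ [1]) @ (n # M))"
    by (rule F1c[where m="n-1"]) (use sM sM1 setM iM1 VM VM1 VnM n2 in auto)
  have B2: "knu_equiv n (M @ (n # M) @ 1 # (n # M) @ []) (M @ (n # M) @ (n # M) @ 1 # [])"
    by (rule F2c[where b=2 and t=n]) (use sM snM setM enM VM VM1 VnM n2 in auto)
  have B3: "knu_equiv n ([] @ M @ n # M @ (n # M @ [1])) ([] @ n # M @ M @ (n # M @ [1]))"
    by (rule F1c[where m="n-1"]) (use sM sM1 setM iM VM VM1 VnM n2 in auto)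
  have B4: "knu_equiv n ((n # M) @ M @ n # (M @ [1]) @ []) ((n # M) @ n # M @ (M @ [1]) @ [])"
    by (rule F1c[where m="n-1"]) (use sM sM1 setM iM1 VM VM1 VnM n2 in auto)
  show ?thesis unfolding col_n col_1 using sy[OF B1] B2 B3 B4 by simp (meson tr)
qed


lemma baseCD:
  assumes Q: "1 < Q" "Q < n"
  shows "knu_equiv n (col n Q @ col n n @ col n 1) (col n Q @ col n 1 @ col n n)"
    and "knu_equiv n (col n n @ col n 1 @ col n Q) (col n 1 @ col n n @ col n Q)"
proof -
  define K where "K = filter (\<lambda>a. a \<noteq> Q) M"
  have sK: "sorted_wrt (>) K" unfolding K_def by (rule sorted_wrt_filter[OF sM])
  have setK: "set K \<subseteq> {2..<n}" unfolding K_def setM[symmetric] by (rule filter_is_subset)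
  have Kle: "\<forall>x\<in>set K. 2 \<le> x \<and> x \<le> n - 1 \<and> x < n" using setK by fastforce
  have lenK: "length K < length M" unfolding K_def
    by (rule length_filter_less) (use setM Q in auto)
  have sK1: "sorted_wrt (>) (K @ [1])" using sK setK by (auto simp: sorted_wrt_append)
  have snK: "sorted_wrt (>) (n # K)" using sK setK by auto
  have VK1: "V n (K @ [1])" using setK n2 by auto
  have VnK: "V n (n # K)" using setK n2 by auto
  have VnK1: "V n (n # K @ [1])" using setK n2 by auto
  have cQ: "col n Q = n # K @ [1]" unfolding K_def using col_Q[OF Q] .
  have C1: "knu_equiv n ([] @ (K @ [1]) @ n # (M @ [1]) @ (n # M)) ([] @ n # (K @ [1]) @ (M @ [1]) @ (n # M))"
    by (rule F1c[where m="n-1"]) (use sK1 sM1 setK iM1 VK1 VM1 VnM n2 lenK Kle in auto)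
  have C2: "knu_equiv n ((K @ [1]) @ (n # M) @ 1 # (n # M) @ []) ((K @ [1]) @ (n # M) @ (n # M) @ 1 # [])"
    by (rule F2c[where b=2 and t=n]) (use snM setM enM VK1 n2 Kle in auto)
  have C3: "knu_equiv n ([] @ (K @ [1]) @ n # M @ (n # M @ [1])) ([] @ n # (K @ [1]) @ M @ (n # M @ [1]))"
    by (rule F1c[where m="n-1"]) (use sK1 sM setK iM VK1 VM VnM n2 lenK setM Kle in auto)
  have C4: "knu_equiv n ((n # K @ [1]) @ M @ n # (M @ [1]) @ []) ((n # K @ [1]) @ n # M @ (M @ [1]) @ [])"
    by (rule F1c[where m="n-1"]) (use sM sM1 setM iM1 VM VM1 VnK1 n2 Kle in auto)
  show "knu_equiv n (col n Q @ col n n @ col n 1) (col n Q @ col n 1 @ col n n)"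
    unfolding cQ col_n col_1 using sy[OF C1] C2 C3 C4 by simp (meson tr)
  have D1: "knu_equiv n ((M @ [1]) @ (n # M) @ 1 # (n # K) @ []) ((M @ [1]) @ (n # M) @ (n # K) @ 1 # [])"
    by (rule F2c[where b=2 and t=n]) (use snK setK enM VM1 n2 lenK Kle in auto)
  have D2: "knu_equiv n ([] @ (M @ [1]) @ n # (M @ [1]) @ (n # K)) ([] @ n # (M @ [1]) @ (M @ [1]) @ (n # K))"
    by (rule F1c[where m="n-1"]) (use sM1 setM iM1 VM1 VnK n2 Kle in auto)
  have D3: "knu_equiv n ((n # M @ [1]) @ M @ 1 # (n # K) @ []) ((n # M @ [1]) @ M @ (n # K) @ 1 # [])"
    by (rule F2c[where b=2 and t="n-1"]) (use snK setK eM VM1 VnM n2 lenK Kle in auto)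
  have D4: "knu_equiv n ([] @ (n # M) @ 1 # M @ (n # K @ [1])) ([] @ (n # M) @ M @ 1 # (n # K @ [1]))"
    by (rule F2c[where b=2 and t=n]) (use sM setM enM VnK1 n2 Kle in auto)
  show "knu_equiv n (col n n @ col n 1 @ col n Q) (col n 1 @ col n n @ col n Q)"
    unfolding cQ col_n col_1 using sy[OF D1] D2 D3 D4 by simp (meson tr)
qed

end


lemma rels: "1 \<le> n \<Longrightarrow>
  (\<forall>P Q R. 1 \<le> R \<and> R < Q \<and> Q \<le> P \<and> P \<le> n \<longrightarrow>
      knu_equiv n (col n P @ col n R @ col n Q) (col n R @ col n P @ col n Q)) \<and>
  (\<forall>P Q R. 1 \<le> R \<and> R \<le> Q \<and> Q < P \<and> P \<le> n \<longrightarrow>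
      knu_equiv n (col n Q @ col n P @ col n R) (col n Q @ col n R @ col n P))"
proof (induction n)
  case 0 then show ?case by simp
next
  case (Suc k)
  show ?case
  proof (cases "k = 0")
    case True then show ?thesis by auto
  next
    case False
    then have k1: "1 \<le> k" by simp
    note IH = Suc.IH[OF k1]
    have n2: "2 \<le> Suc k" using k1 by simp
    note bA = baseA[OF n2 HOL.refl] and bB = baseB[OF n2 HOL.refl] and bCD = baseCD[OF n2 HOL.refl]
    show ?thesis
    proof (intro conjI allI impI)
      fix P Q R assume h: "1 \<le> R \<and> R < Q \<and> Q \<le> P \<and> P \<le> Suc k"
      show "knu_equiv (Suc k) (col (Suc k) P @ col (Suc k) R @ col (Suc k) Q) (col (Suc k) R @ col (Suc k) P @ col (Suc k) Q)"
      proof (cases "R = 1 \<and> P = Suc k")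
        case True
        show ?thesis
        proof (cases "Q = Suc k")
          case True then show ?thesis using bA \<open>R = 1 \<and> P = Suc k\<close> by simp
        next
          case False then show ?thesis using bCD(2)[of Q] \<open>R = 1 \<and> P = Suc k\<close> h by simp
        qed
      next
        case False
        show ?thesis
        proof (cases "2 \<le> R")
          case True
          have "knu_equiv k (col k (P-1) @ col k (R-1) @ col k (Q-1)) (col k (R-1) @ col k (P-1) @ col k (Q-1))"
          proof -
            have "1 \<le> R-1 \<and> R-1 < Q-1 \<and> Q-1 \<le> P-1 \<and> P-1 \<le> k" using h True by linarith
            then show ?thesis using conjunct1[OF IH, rule_format, of "R-1" "Q-1" "P-1"] by blast
          qed
          then show ?thesis using red1[of k P R Q R P Q] h True by auto
        next
          case f2: False
          have "knu_equiv k (col k P @ col k R @ col k Q) (col k R @ col k P @ col k Q)"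
            using conjunct1[OF IH, rule_format, of R Q P] h False f2 by auto
          then show ?thesis using red2[of P R Q R P Q k] h False f2 k1 by auto
        qed
      qed
    next
      fix P Q R assume h: "1 \<le> R \<and> R \<le> Q \<and> Q < P \<and> P \<le> Suc k"
      show "knu_equiv (Suc k) (col (Suc k) Q @ col (Suc k) P @ col (Suc k) R) (col (Suc k) Q @ col (Suc k) R @ col (Suc k) P)"
      proof (cases "R = 1 \<and> P = Suc k")
        case True
        show ?thesis
        proof (cases "Q = 1")
          case True then show ?thesis using bB \<open>R = 1 \<and> P = Suc k\<close> by simp
        next
          case False then show ?thesis using bCD(1)[of Q] \<open>R = 1 \<and> P = Suc k\<close> h by simp
        qed
      next
        case False
        show ?thesis
        proof (cases "2 \<le> R")
          case True
          have "knu_equiv k (col k (Q-1) @ col k (P-1) @ col k (R-1)) (col k (Q-1) @ col k (R-1) @ col k (P-1))"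
          proof -
            have "1 \<le> R-1 \<and> R-1 \<le> Q-1 \<and> Q-1 < P-1 \<and> P-1 \<le> k" using h True by linarith
            then show ?thesis using conjunct2[OF IH, rule_format, of "R-1" "Q-1" "P-1"] by blast
          qed
          then show ?thesis using red1[of k Q P R Q R P] h True by auto
        next
          case f2: False
          have "knu_equiv k (col k Q @ col k P @ col k R) (col k Q @ col k R @ col k P)"
            using conjunct2[OF IH, rule_format, of R Q P] h False f2 by auto
          then show ?thesis using red2[of Q P R Q R P k] h False f2 k1 by auto
        qed
      qed
    qed
  qed
qed

lemma cmr_letter_col: "cmr_letter n l = col n (n - l + 1)"
  by (simp add: cmr_letter_def col_def)

lemma cmr3: "cmr n [a, b, c] = col n (n - a + 1) @ col n (n - b + 1) @ col n (n - c + 1)"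
  by (simp add: cmr_def cmr_letter_col)

lemma cmr_app: "cmr n (u @ v) = cmr n u @ cmr n v" by (simp add: cmr_def)

lemma cmr_V: "V n (cmr n u)"
  by (auto simp: cmr_def cmr_letter_col col_set)

theorem mainTheorem14:
  fixes n :: nat
  assumes "n \<ge> 1"
  shows "(\<forall>p q r. 1 \<le> p \<and> p \<le> q \<and> q < r \<and> r \<le> n \<longrightarrow>
            knu_equiv n (cmr n [p, r, q]) (cmr n [r, p, q]))
       \<and> (\<forall>p q r. 1 \<le> p \<and> p < q \<and> q \<le> r \<and> r \<le> n \<longrightarrow>
            knu_equiv n (cmr n [q, p, r]) (cmr n [q, r, p]))
       \<and> (\<forall>u v. set u \<subseteq> {1..n} \<longrightarrow> set v \<subseteq> {1..n} \<longrightarrow>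
            knu_equiv n u v \<longrightarrow> knu_equiv n (cmr n u) (cmr n v))"
proof -
  note R = rels[OF assms]
  have P1: "\<forall>p q r. 1 \<le> p \<and> p \<le> q \<and> q < r \<and> r \<le> n \<longrightarrow>
            knu_equiv n (cmr n [p, r, q]) (cmr n [r, p, q])"
  proof (intro allI impI)
    fix p q r assume h: "1 \<le> p \<and> p \<le> q \<and> q < r \<and> r \<le> n"
    have "knu_equiv n (col n (n - p + 1) @ col n (n - r + 1) @ col n (n - q + 1))
                      (col n (n - r + 1) @ col n (n - p + 1) @ col n (n - q + 1))"
      using R h by (elim conjE allE impE) auto
    then show "knu_equiv n (cmr n [p, r, q]) (cmr n [r, p, q])" by (simp add: cmr3)
  qed
  have P2: "\<forall>p q r. 1 \<le> p \<and> p < q \<and> q \<le> r \<and> r \<le> n \<longrightarrow>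
            knu_equiv n (cmr n [q, p, r]) (cmr n [q, r, p])"
  proof (intro allI impI)
    fix p q r assume h: "1 \<le> p \<and> p < q \<and> q \<le> r \<and> r \<le> n"
    have "knu_equiv n (col n (n - q + 1) @ col n (n - p + 1) @ col n (n - r + 1))
                      (col n (n - q + 1) @ col n (n - r + 1) @ col n (n - p + 1))"
      using R h by (elim conjE allE impE) auto
    then show "knu_equiv n (cmr n [q, p, r]) (cmr n [q, r, p])" by (simp add: cmr3)
  qed
  have P3: "knu_equiv n u v \<Longrightarrow> knu_equiv n (cmr n u) (cmr n v)" for u v
  proof (induction rule: knu_equiv.induct)
    case (refl u) then show ?case by (intro knu_equiv.refl cmr_V)
  next
    case (step u v)
    from step show ?case
    proof (cases rule: knu_step.cases)
      case (knuth1 u' w x y z)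
      have "knu_equiv n (cmr n [x, z, y]) (cmr n [z, x, y])" using P1 knuth1 by auto
      then have "knu_equiv n (cmr n u' @ cmr n [x, z, y] @ cmr n w) (cmr n u' @ cmr n [z, x, y] @ cmr n w)"
        by (intro ctx cmr_V)
      then show ?thesis using knuth1 by (simp only: cmr_app)
    next
      case (knuth2 u' w x y z)
      have "knu_equiv n (cmr n [y, x, z]) (cmr n [y, z, x])" using P2 knuth2 by auto
      then have "knu_equiv n (cmr n u' @ cmr n [y, x, z] @ cmr n w) (cmr n u' @ cmr n [y, z, x] @ cmr n w)"
        by (intro ctx cmr_V)
      then show ?thesis using knuth2 by (simp only: cmr_app)
    qed
  next
    case (sym u v) then show ?case by (blast intro: knu_equiv.sym)
  next
    case (trans u v w) then show ?case by (blast intro: knu_equiv.trans)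
  qed
  show ?thesis using P1 P2 P3 by blast
qed

end
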